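(* Let $\Omega$ be a measure space and $Z:=L^2(\Omega)$. Let $(a^k)$ and $(b^k)$ be bounded sequences in $Z$. If $\min\{a^k,b^k\}\to 0$ in $Z$, then $\langle a^k,b^k\rangle\to 0$.
   Context: $\min\{a,b\}$ denotes the pointwise minimum of $a,b\in Z$, and $\langle\cdot,\cdot\rangle$ is the inner product of $L^2(\Omega)$. *)

theory Defs
  imports "HOL-Analysis.Analysis"
begin

definition L2 :: "'a measure \<Rightarrow> ('a \<Rightarrow> real) set" where
  "L2 M = {f. f \<in> borel_measurable M \<and> integrable M (\<lambda>x. (f x)\<^sup>2)}"

definition L2_norm :: "'a measure \<Rightarrow> ('a \<Rightarrow> real) \<Rightarrow> real" where
  "L2_norm M f = sqrt (LINT x|M. (f x)\<^sup>2)"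

definition L2_inner :: "'a measure \<Rightarrow> ('a \<Rightarrow> real) \<Rightarrow> ('a \<Rightarrow> real) \<Rightarrow> real" where
  "L2_inner M f g = (LINT x|M. f x * g x)"

end

theory Submission
  imports Defs
begin

lemma quad_disc:
  fixes A B C :: real
  assumes "\<And>t. 0 \<le> A - 2 * t * B + t\<^sup>2 * C" and "C \<ge> 0"
  shows "B\<^sup>2 \<le> A * C"
proof (cases "C > 0")
  case True
  have "0 \<le> A - 2 * (B / C) * B + (B / C)\<^sup>2 * C" by (rule assms)
  also have "\<dots> = A - B\<^sup>2 / C" using True by (simp add: field_simps power2_eq_square)
  finally have "B\<^sup>2 / C \<le> A" by simp
  then show ?thesis using True by (simp add: field_simps)
next
  case False
  with False assms(2) have "C = 0" by simp
  have "B = 0"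
  proof (rule ccontr)
    assume "B \<noteq> 0"
    have "0 \<le> A - 2 * ((\<bar>A\<bar> + 1) / (2 * B)) * B + ((\<bar>A\<bar> + 1) / (2 * B))\<^sup>2 * C" by (rule assms)
    also have "\<dots> = A - (\<bar>A\<bar> + 1)" using \<open>B \<noteq> 0\<close> \<open>C = 0\<close> by (simp add: field_simps)
    finally show False by simp
  qed
  then show ?thesis using \<open>C = 0\<close> by simp
qed

lemma integrable_prod_L2:
  fixes f g :: "'a \<Rightarrow> real"
  assumes "f \<in> L2 M" "g \<in> L2 M"
  shows "integrable M (\<lambda>x. f x * g x)"
proof -
  have m[measurable]: "f \<in> borel_measurable M" "g \<in> borel_measurable M"
    and i: "integrable M (\<lambda>x. (f x)\<^sup>2)" "integrable M (\<lambda>x. (g x)\<^sup>2)"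
    using assms by (auto simp: L2_def)
  have "integrable M (\<lambda>x. (f x)\<^sup>2 + (g x)\<^sup>2)" using i by simp
  then show ?thesis
  proof (rule Bochner_Integration.integrable_bound)
    show "(\<lambda>x. f x * g x) \<in> borel_measurable M" by measurable
    show "AE x in M. norm (f x * g x) \<le> norm ((f x)\<^sup>2 + (g x)\<^sup>2)"
    proof (rule AE_I2)
      fix x
      have "2 * \<bar>f x * g x\<bar> \<le> (f x)\<^sup>2 + (g x)\<^sup>2"
      proof -
        have "0 \<le> (\<bar>f x\<bar> - \<bar>g x\<bar>)\<^sup>2" by simp
        hence "2 * \<bar>f x\<bar> * \<bar>g x\<bar> \<le> (f x)\<^sup>2 + (g x)\<^sup>2"
          by (simp add: power2_diff)
        then show ?thesis by (simp add: abs_mult)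
      qed
      then show "norm (f x * g x) \<le> norm ((f x)\<^sup>2 + (g x)\<^sup>2)" by simp
    qed
  qed
qed

lemma L2_CS:
  fixes f g :: "'a \<Rightarrow> real"
  assumes "f \<in> L2 M" "g \<in> L2 M"
  shows "\<bar>L2_inner M f g\<bar> \<le> L2_norm M f * L2_norm M g"
proof -
  have i: "integrable M (\<lambda>x. (f x)\<^sup>2)" "integrable M (\<lambda>x. (g x)\<^sup>2)"
    using assms by (auto simp: L2_def)
  have ifg: "integrable M (\<lambda>x. f x * g x)" using integrable_prod_L2[OF assms] .
  define A where "A = (LINT x|M. (f x)\<^sup>2)"
  define B where "B = (LINT x|M. f x * g x)"
  define C where "C = (LINT x|M. (g x)\<^sup>2)"
  have "\<And>t. 0 \<le> A - 2 * t * B + t\<^sup>2 * C"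
  proof -
    fix t :: real
    have "0 \<le> (LINT x|M. (f x - t * g x)\<^sup>2)" by simp
    also have "(LINT x|M. (f x - t * g x)\<^sup>2)
       = (LINT x|M. (f x)\<^sup>2 - (2 * t) * (f x * g x) + t\<^sup>2 * (g x)\<^sup>2)"
      by (rule Bochner_Integration.integral_cong) (auto simp: power2_eq_square algebra_simps)
    also have "\<dots> = A - 2 * t * B + t\<^sup>2 * C"
      unfolding A_def B_def C_def using i ifg by simp
    finally show "0 \<le> A - 2 * t * B + t\<^sup>2 * C" .
  qed
  hence "B\<^sup>2 \<le> A * C" by (rule quad_disc) (simp add: C_def)
  hence "sqrt (B\<^sup>2) \<le> sqrt (A * C)" by (rule real_sqrt_le_mono)
  hence "\<bar>B\<bar> \<le> sqrt A * sqrt C" by (simp only: real_sqrt_abs real_sqrt_mult)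
  then show ?thesis
    unfolding L2_inner_def L2_norm_def A_def[symmetric] B_def[symmetric] C_def[symmetric]
    by simp
qed

theorem lemma2p2:
  fixes M :: "'a measure" and a b :: "nat \<Rightarrow> 'a \<Rightarrow> real"
  assumes "\<And>k. a k \<in> L2 M" and "\<And>k. b k \<in> L2 M"
    and "\<exists>C. \<forall>k. L2_norm M (a k) \<le> C"
    and "\<exists>C. \<forall>k. L2_norm M (b k) \<le> C"
    and "(\<lambda>k. L2_norm M (\<lambda>x. min (a k x) (b k x))) \<longlonglongrightarrow> 0"
  shows "(\<lambda>k. L2_inner M (a k) (b k)) \<longlonglongrightarrow> 0"
proof -
  obtain Ca where Ca: "\<And>k. L2_norm M (a k) \<le> Ca" using assms(3) by blast
  obtain Cb where Cb: "\<And>k. L2_norm M (b k) \<le> Cb" using assms(4) by blast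
  define K where "K = sqrt (Ca\<^sup>2 + Cb\<^sup>2)"
  have bound: "\<bar>L2_inner M (a k) (b k)\<bar> \<le> L2_norm M (\<lambda>x. min (a k x) (b k x)) * K" for k
  proof -
    have ma[measurable]: "a k \<in> borel_measurable M" and mb[measurable]: "b k \<in> borel_measurable M"
      and ia: "integrable M (\<lambda>x. (a k x)\<^sup>2)" and ib: "integrable M (\<lambda>x. (b k x)\<^sup>2)"
      using assms(1,2)[of k] by (auto simp: L2_def)
    have iab: "integrable M (\<lambda>x. (a k x)\<^sup>2 + (b k x)\<^sup>2)" using ia ib by simp
    have sq: "\<And>x. (min (a k x) (b k x))\<^sup>2 \<le> (a k x)\<^sup>2 + (b k x)\<^sup>2"
         "\<And>x. (max (a k x) (b k x))\<^sup>2 \<le> (a k x)\<^sup>2 + (b k x)\<^sup>2"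
      by (auto simp: min_def max_def)
    have mL2: "(\<lambda>x. min (a k x) (b k x)) \<in> L2 M"
      unfolding L2_def
    proof (intro CollectI conjI)
      show "(\<lambda>x. min (a k x) (b k x)) \<in> borel_measurable M" by measurable
      show "integrable M (\<lambda>x. (min (a k x) (b k x))\<^sup>2)"
        by (rule Bochner_Integration.integrable_bound[OF iab]) (auto intro: sq)
    qed
    have ML2: "(\<lambda>x. max (a k x) (b k x)) \<in> L2 M"
      unfolding L2_def
    proof (intro CollectI conjI)
      show "(\<lambda>x. max (a k x) (b k x)) \<in> borel_measurable M" by measurable
      show "integrable M (\<lambda>x. (max (a k x) (b k x))\<^sup>2)"
        by (rule Bochner_Integration.integrable_bound[OF iab]) (auto intro: sq)
    qed
    have eq: "L2_inner M (a k) (b k) = L2_inner M (\<lambda>x. min (a k x) (b k x)) (\<lambda>x. max (a k x) (b k x))"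
      unfolding L2_inner_def
      by (rule Bochner_Integration.integral_cong) (auto simp: min_def max_def)
    have na: "0 \<le> L2_norm M (a k)" and nb: "0 \<le> L2_norm M (b k)"
      by (auto simp: L2_norm_def)
    have "(L2_norm M (\<lambda>x. max (a k x) (b k x)))\<^sup>2 = (LINT x|M. (max (a k x) (b k x))\<^sup>2)"
      unfolding L2_norm_def by simp
    also have "\<dots> \<le> (LINT x|M. (a k x)\<^sup>2 + (b k x)\<^sup>2)"
      by (rule integral_mono) (use ML2 iab sq in \<open>auto simp: L2_def\<close>)
    also have "\<dots> = (L2_norm M (a k))\<^sup>2 + (L2_norm M (b k))\<^sup>2"
      using ia ib unfolding L2_norm_def by simp
    also have "\<dots> \<le> Ca\<^sup>2 + Cb\<^sup>2"
      using Ca[of k] Cb[of k] na nb by (intro add_mono power_mono) auto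
    finally have "L2_norm M (\<lambda>x. max (a k x) (b k x)) \<le> K"
      unfolding K_def by (simp add: real_le_rsqrt)
    moreover have "0 \<le> L2_norm M (\<lambda>x. min (a k x) (b k x))" by (simp add: L2_norm_def)
    ultimately show ?thesis
      using L2_CS[OF mL2 ML2] eq by (metis mult_left_mono order_trans)
  qed
  have "(\<lambda>k. L2_norm M (\<lambda>x. min (a k x) (b k x)) * K) \<longlonglongrightarrow> 0 * K"
    by (intro tendsto_intros assms(5))
  hence lim: "(\<lambda>k. L2_norm M (\<lambda>x. min (a k x) (b k x)) * K) \<longlonglongrightarrow> 0" by simp
  have ev: "\<forall>\<^sub>F k in sequentially. norm (L2_inner M (a k) (b k)) \<le> L2_norm M (\<lambda>x. min (a k x) (b k x)) * K"
    using bound by (simp add: always_eventually)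
  show ?thesis by (rule Lim_null_comparison[OF ev lim])
qed

end
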